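(* For all CCSK transitions $t,u$: $t,u$ are key independent if and only if $t\odot u$.
   Context: Names $\mathsf N$ with bijection $\overline\cdot$ onto disjoint co-names; $\mathsf L=\mathsf N\cup\overline{\mathsf N}\cup\{\tau\}$ ($\alpha,\beta$ over $\mathsf L$, $\lambda$ over $\mathsf L\setminus\{\tau\}$); keys $\mathsf K$ denumerable. CCSK processes $X::=\mathbf 0\mid\alpha.X\mid X\backslash\lambda\mid X+Y\mid X|Y\mid\alpha[k].X$; $\mathrm{keys}(X)$ keys in $X$. Directions $D\in\{\mathrm L,\mathrm R\}$, $\bar{\mathrm L}=\mathrm R$, $\bar{\mathrm R}=\mathrm L$. Proof keyed labels $\theta::=\upsilon\alpha[k]\mid\upsilon\langle\upsilon_1\lambda[k],\upsilon_2\overline\lambda[k]\rangle$ ($\upsilon,\upsilon_i\in\{|_{\mathrm L},|_{\mathrm R},+_{\mathrm L},+_{\mathrm R}\}^*$), $\ell(\upsilon\alpha[k])=\alpha$, $\ell(\upsilon\langle\cdots\rangle)=\tau$, $\mathrm{key}(\theta)=k$. Forward CCSK$^{\mathrm P}$ transitions: least relation closed under (act) $\alpha.X\xrightarrow{\alpha[k]}\alpha[k].X$ if $\mathrm{keys}(X)=\emptyset$; (pre) $X\xrightarrow\theta X',\mathrm{key}(\theta)\ne k\Rightarrow\alpha[k].X\xrightarrow\theta\alpha[k].X'$; (res) $X\xrightarrow\theta X',\ell(\theta)\notin\{\lambda,\overline\lambda\}\Rightarrow X\backslash\lambda\xrightarrow\theta X'\backslash\lambda$; (par) $X\xrightarrow\theta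 X',\mathrm{key}(\theta)\notin\mathrm{keys}(Y)\Rightarrow X|Y\xrightarrow{|_{\mathrm L}\theta}X'|Y$, $Y|X\xrightarrow{|_{\mathrm R}\theta}Y|X'$; (syn) $X\xrightarrow{\upsilon_1\lambda[k]}X',Y\xrightarrow{\upsilon_2\overline\lambda[k]}Y'\Rightarrow X|Y\xrightarrow{\langle\upsilon_1\lambda[k],\upsilon_2\overline\lambda[k]\rangle}X'|Y'$; (sum) $X\xrightarrow\theta X',\mathrm{keys}(Y)=\emptyset\Rightarrow X+Y\xrightarrow{+_{\mathrm L}\theta}X'+Y$, $Y+X\xrightarrow{+_{\mathrm R}\theta}Y+X'$. Backward transitions are converses; $\bar t$ is the inverse of $t$. Paths are sequences of composable transitions; $\mathrm{keys}(r)$ is the set of keys of transitions of $r$; only processes reachable by a path from a key-free process are considered. Transitions are connected if there is a path from the source of one to the target of the other. CCSK: same processes, each CCSK$^{\mathrm P}$ transition with label $\theta$ gives a CCSK transition with label $\ell(\theta)[\mathrm{key}(\theta)]$ (bijection; $\hat t$ the CCSK$^{\mathrm P}$ transition of $t$). Independence $\iota$ on proof labels: least relation closed under (C1) $+_D\theta\mathrel\iota+_D\theta'$ if $\theta\mathrel\iota\theta'$; (P1) $|_D\theta\mathrel\iota|_D\theta'$ if $\theta\mathrel\iota\theta'$; (P2$_k$) $|_D\theta\mathrel\iota|_{\bar D}\theta'$ if keys differ; (S1) $|_D\theta\mathrel\iota\langle\theta_{\mathrm L},\theta_{\mathrm R}\rangle$ if $\theta\mathrel\iota\theta_D$; (S2)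 $\langle\theta_{\mathrm L},\theta_{\mathrm R}\rangle\mathrel\iota|_D\theta$ if $\theta_D\mathrel\iota\theta$; (S3) $\langle\theta_1,\theta_2\rangle\mathrel\iota\langle\theta_1',\theta_2'\rangle$ if $\theta_1\mathrel\iota\theta_1'$, $\theta_2\mathrel\iota\theta_2'$. For CCSK transitions $t\mathrel\iota u$ iff connected and labels of $\hat t,\hat u$ satisfy $\iota$. Event equivalence $\sim$ on CCSK transitions: smallest equivalence with $t\sim t'$ whenever $t:P\to Q$, $u:P\to R$, $u':Q\to S$, $t':R\to S$ ($u'$ with label and direction of $u$, $t'$ of $t$) and $t\mathrel\iota u$; events are classes $[t]$. Core independence: $t\odot u$ iff there are coinitial $t'\in[t]$, $u'\in[u]$ with $t'\mathrel\iota u'$. Event key equivalence $\sim_{\mathsf k}$: forward $t_1:X_1\to X_1'$, $t_2:X_2\to X_2'$ with the same key $k$ satisfy $t_1\sim_{\mathsf k}t_2$ iff there is a path from $X_1'$ to $X_2'$ not using key $k$; in general $t_1\sim_{\mathsf k}t_2$ iff $\mathrm{fwd}(t_1)\sim_{\mathsf k}\mathrm{fwd}(t_2)$ with $\mathrm{fwd}(t)=t$ if forward, $\bar t$ otherwise. Transitions $t:P\to Q$ with label $\alpha[m]$ and $u:P\to R$ with label $\beta[n]$ are directly key independent if $m\ne n$ and there are $u':Q\to S$ with label $\beta[n]$ (direction of $u$) and $t':R\to S$ with label $\alpha[m]$ (direction of $t$). Connected CCSK transitions $t,u$ are key independent if there are $t',u'$ with $t\sim_{\mathsf k}t'$, $u\sim_{\mathsf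 k}u'$ and $t',u'$ directly key independent. *)

theory Defs
  imports Main
begin

datatype 'n vlab = Nm 'n | CoNm 'n

datatype 'n act = Vis "'n vlab" | Tau

fun bar :: "'n vlab \<Rightarrow> 'n vlab" where
  "bar (Nm a) = CoNm a"
| "bar (CoNm a) = Nm a"

type_synonym key = nat

datatype 'n proc =
    PNil
  | Pre "'n act" "'n proc"
  | Res "'n proc" "'n vlab"
  | Sum "'n proc" "'n proc"
  | Par "'n proc" "'n proc"
  | KPre "'n act" key "'n proc"

fun keys :: "'n proc \<Rightarrow> key set" where
  "keys PNil = {}"
| "keys (Pre a X) = keys X"
| "keys (Res X l) = keys X"
| "keys (Sum X Y) = keys X \<union> keys Y"
| "keys (Par X Y) = keys X \<union> keys Y"
| "keys (KPre a k X) = insert k (keys X)"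

datatype side = SL | SR

fun oside :: "side \<Rightarrow> side" where
  "oside SL = SR" | "oside SR = SL"

datatype dop = DPar side | DSum side

text \<open>A proof keyed label: upsilon alpha[k] is a sequence of prefixes applied to a base
  label; upsilon <theta1,theta2> is a sequence of prefixes applied to a synchronisation pair.\<close>
datatype 'n plab = PBase "'n act" key | PPfx dop "'n plab" | PSyn "'n plab" "'n plab"

fun ell :: "'n plab \<Rightarrow> 'n act" where
  "ell (PBase a k) = a"
| "ell (PPfx d th) = ell th"
| "ell (PSyn th1 th2) = Tau"

fun pkey :: "'n plab \<Rightarrow> key" where
  "pkey (PBase a k) = k"
| "pkey (PPfx d th) = pkey th"
| "pkey (PSyn th1 th2) = pkey th1"

inductive fstep :: "'n proc \<Rightarrow> 'n plab \<Rightarrow> 'n proc \<Rightarrow> bool" where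
  act: "keys X = {} \<Longrightarrow> fstep (Pre a X) (PBase a k) (KPre a k X)"
| pre: "fstep X th X' \<Longrightarrow> pkey th \<noteq> k \<Longrightarrow> fstep (KPre a k X) th (KPre a k X')"
| res: "fstep X th X' \<Longrightarrow> ell th \<noteq> Vis l \<Longrightarrow> ell th \<noteq> Vis (bar l)
        \<Longrightarrow> fstep (Res X l) th (Res X' l)"
| parL: "fstep X th X' \<Longrightarrow> pkey th \<notin> keys Y \<Longrightarrow> fstep (Par X Y) (PPfx (DPar SL) th) (Par X' Y)"
| parR: "fstep X th X' \<Longrightarrow> pkey th \<notin> keys Y \<Longrightarrow> fstep (Par Y X) (PPfx (DPar SR) th) (Par Y X')"
| syn: "fstep X th1 X' \<Longrightarrow> fstep Y th2 Y' \<Longrightarrow> ell th1 = Vis l \<Longrightarrow> ell th2 = Vis (bar l)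
        \<Longrightarrow> pkey th1 = pkey th2 \<Longrightarrow> fstep (Par X Y) (PSyn th1 th2) (Par X' Y')"
| sumL: "fstep X th X' \<Longrightarrow> keys Y = {} \<Longrightarrow> fstep (Sum X Y) (PPfx (DSum SL) th) (Sum X' Y)"
| sumR: "fstep X th X' \<Longrightarrow> keys Y = {} \<Longrightarrow> fstep (Sum Y X) (PPfx (DSum SR) th) (Sum Y X')"

fun comp :: "side \<Rightarrow> 'n plab \<Rightarrow> 'n plab \<Rightarrow> 'n plab" where
  "comp SL a b = a" | "comp SR a b = b"

inductive pindep :: "'n plab \<Rightarrow> 'n plab \<Rightarrow> bool" where
  C1: "pindep th th' \<Longrightarrow> pindep (PPfx (DSum D) th) (PPfx (DSum D) th')"
| P1: "pindep th th' \<Longrightarrow> pindep (PPfx (DPar D) th) (PPfx (DPar D) th')"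
| P2: "pkey th \<noteq> pkey th' \<Longrightarrow> pindep (PPfx (DPar D) th) (PPfx (DPar (oside D)) th')"
| S1: "pindep th (comp D thL thR) \<Longrightarrow> pindep (PPfx (DPar D) th) (PSyn thL thR)"
| S2: "pindep (comp D thL thR) th \<Longrightarrow> pindep (PSyn thL thR) (PPfx (DPar D) th)"
| S3: "pindep th1 th1' \<Longrightarrow> pindep th2 th2' \<Longrightarrow> pindep (PSyn th1 th2) (PSyn th1' th2')"

datatype tdir = Fw | Bw

datatype 'n trans = Tr (src: "'n proc") (tdir: tdir) (lbl: "'n act") (tkey: key) (tgt: "'n proc")

definition any_step :: "'n proc \<Rightarrow> 'n proc \<Rightarrow> bool" where
  "any_step P Q \<longleftrightarrow> (\<exists>th. fstep P th Q \<or> fstep Q th P)"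

definition reachable :: "'n proc \<Rightarrow> bool" where
  "reachable X \<longleftrightarrow> (\<exists>X0. keys X0 = {} \<and> (X0, X) \<in> {(P, Q). any_step P Q}\<^sup>*)"

text \<open>theta is the proof keyed label of the CCSK^P transition corresponding to t (t hat).\<close>
definition hat_lab :: "'n trans \<Rightarrow> 'n plab \<Rightarrow> bool" where
  "hat_lab t th \<longleftrightarrow>
     (if tdir t = Fw then fstep (src t) th (tgt t) else fstep (tgt t) th (src t))
     \<and> ell th = lbl t \<and> pkey th = tkey t"

definition is_trans :: "'n trans \<Rightarrow> bool" where
  "is_trans t \<longleftrightarrow> reachable (src t) \<and> (\<exists>th. hat_lab t th)"

definition path_rel :: "('n proc \<times> 'n proc) set" where
  "path_rel = {(P, Q). \<exists>t. is_trans t \<and> src t = P \<and> tgt t = Q}"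

definition connected :: "'n trans \<Rightarrow> 'n trans \<Rightarrow> bool" where
  "connected t u \<longleftrightarrow> (src t, tgt u) \<in> path_rel\<^sup>*"

definition tindep :: "'n trans \<Rightarrow> 'n trans \<Rightarrow> bool" where
  "tindep t u \<longleftrightarrow> is_trans t \<and> is_trans u \<and> connected t u \<and>
     (\<exists>th th'. hat_lab t th \<and> hat_lab u th' \<and> pindep th th')"

definition square :: "'n trans \<Rightarrow> 'n trans \<Rightarrow> bool" where
  "square t t' \<longleftrightarrow> (\<exists>u u'. is_trans t \<and> is_trans u \<and> is_trans u' \<and> is_trans t' \<and>
     src u = src t \<and> src u' = tgt t \<and> src t' = tgt u \<and> tgt u' = tgt t' \<and>
     lbl u' = lbl u \<and> tkey u' = tkey u \<and> tdir u' = tdir u \<and>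
     lbl t' = lbl t \<and> tkey t' = tkey t \<and> tdir t' = tdir t \<and>
     tindep t u)"

inductive ev_equiv :: "'n trans \<Rightarrow> 'n trans \<Rightarrow> bool" where
  base: "square t t' \<Longrightarrow> ev_equiv t t'"
| refl: "ev_equiv t t"
| sym: "ev_equiv t t' \<Longrightarrow> ev_equiv t' t"
| trans: "ev_equiv t t' \<Longrightarrow> ev_equiv t' t'' \<Longrightarrow> ev_equiv t t''"

definition core_indep :: "'n trans \<Rightarrow> 'n trans \<Rightarrow> bool" where
  "core_indep t u \<longleftrightarrow> (\<exists>t' u'. src t' = src u' \<and> ev_equiv t t' \<and> ev_equiv u u' \<and> tindep t' u')"

definition fwd :: "'n trans \<Rightarrow> 'n trans" where
  "fwd t = (if tdir t = Fw then t else Tr (tgt t) Fw (lbl t) (tkey t) (src t))"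

definition path_rel_avoid :: "key \<Rightarrow> ('n proc \<times> 'n proc) set" where
  "path_rel_avoid k = {(P, Q). \<exists>t. is_trans t \<and> src t = P \<and> tgt t = Q \<and> tkey t \<noteq> k}"

definition key_equiv :: "'n trans \<Rightarrow> 'n trans \<Rightarrow> bool" where
  "key_equiv t1 t2 \<longleftrightarrow> tkey (fwd t1) = tkey (fwd t2) \<and>
     (tgt (fwd t1), tgt (fwd t2)) \<in> (path_rel_avoid (tkey (fwd t1)))\<^sup>*"

definition direct_key_indep :: "'n trans \<Rightarrow> 'n trans \<Rightarrow> bool" where
  "direct_key_indep t u \<longleftrightarrow> is_trans t \<and> is_trans u \<and> src t = src u \<and> tkey t \<noteq> tkey u \<and>
     (\<exists>u' t'. is_trans u' \<and> is_trans t' \<and> src u' = tgt t \<and> src t' = tgt u \<and> tgt u' = tgt t' \<and>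
        lbl u' = lbl u \<and> tkey u' = tkey u \<and> tdir u' = tdir u \<and>
        lbl t' = lbl t \<and> tkey t' = tkey t \<and> tdir t' = tdir t)"

definition key_indep :: "'n trans \<Rightarrow> 'n trans \<Rightarrow> bool" where
  "key_indep t u \<longleftrightarrow> connected t u \<and>
     (\<exists>t' u'. is_trans t' \<and> is_trans u' \<and> key_equiv t t' \<and> key_equiv u u' \<and> direct_key_indep t' u')"

end

theory Submission
  imports Defs
begin

lemma keys_fstep: "fstep X a Y \<Longrightarrow> keys Y = insert (pkey a) (keys X) \<and> pkey a \<notin> keys X"
  by (induction rule: fstep.induct) auto

fun wfl :: "'n plab \<Rightarrow> bool" where
  "wfl (PBase a k) = True"
| "wfl (PPfx d th) = wfl th"
| "wfl (PSyn a b) = (wfl a \<and> wfl b \<and> pkey a = pkey b)"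

lemma wfl_fstep: "fstep X a Y \<Longrightarrow> wfl a"
  by (induction rule: fstep.induct) auto

lemma pindep_key: "pindep a b \<Longrightarrow> wfl a \<Longrightarrow> wfl b \<Longrightarrow> pkey a \<noteq> pkey b"
proof (induction rule: pindep.induct)
  case (S1 th D thL thR) then show ?case by (cases D) auto
next
  case (S2 D thL thR th) then show ?case by (cases D) auto
qed auto

lemma oside_oside[simp]: "oside (oside D) = D" by (cases D) auto

lemma pindep_sym: "pindep a b \<Longrightarrow> pindep b a"
proof (induction rule: pindep.induct)
  case (P2 th th' D)
  then show ?case using pindep.P2[of th' th "oside D"] by auto
qed (auto intro: pindep.intros)

inductive_cases fsKPreT: "fstep Z b (KPre c k X)"
inductive_cases fsResT: "fstep Z b (Res X l)"
inductive_cases fsParT: "fstep Z b (Par X Y)"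
inductive_cases fsSumT: "fstep Z b (Sum X Y)"
inductive_cases fsPreT: "fstep Z b (Pre c X)"
inductive_cases fsPNilT: "fstep Z b PNil"

lemma fs_key_in: "fstep X a Y \<Longrightarrow> pkey a \<in> keys Y"
  using keys_fstep by blast

lemma invKPre: "fstep Z b (KPre c k X) \<longleftrightarrow>
   (Z = Pre c X \<and> b = PBase c k \<and> keys X = {}) \<or> (\<exists>Z0. Z = KPre c k Z0 \<and> fstep Z0 b X \<and> pkey b \<noteq> k)"
  by (auto elim: fsKPreT intro: fstep.intros)

lemma invRes: "fstep Z b (Res X l) \<longleftrightarrow>
   (\<exists>Z0. Z = Res Z0 l \<and> fstep Z0 b X \<and> ell b \<noteq> Vis l \<and> ell b \<noteq> Vis (bar l))"
  by (auto elim: fsResT intro: fstep.intros)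

lemma invSum: "fstep Z b (Sum X Y) \<longleftrightarrow>
   (\<exists>Z0 b0. Z = Sum Z0 Y \<and> b = PPfx (DSum SL) b0 \<and> fstep Z0 b0 X \<and> keys Y = {}) \<or>
   (\<exists>Z0 b0. Z = Sum X Z0 \<and> b = PPfx (DSum SR) b0 \<and> fstep Z0 b0 Y \<and> keys X = {})"
  by (auto elim: fsSumT intro: fstep.intros)

lemma invPar: "fstep Z b (Par X Y) \<longleftrightarrow>
   (\<exists>Z0 b0. Z = Par Z0 Y \<and> b = PPfx (DPar SL) b0 \<and> fstep Z0 b0 X \<and> pkey b0 \<notin> keys Y) \<or>
   (\<exists>Z0 b0. Z = Par X Z0 \<and> b = PPfx (DPar SR) b0 \<and> fstep Z0 b0 Y \<and> pkey b0 \<notin> keys X) \<or>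
   (\<exists>Z1 Z2 b1 b2 l. Z = Par Z1 Z2 \<and> b = PSyn b1 b2 \<and> fstep Z1 b1 X \<and> fstep Z2 b2 Y \<and>
       ell b1 = Vis l \<and> ell b2 = Vis (bar l) \<and> pkey b1 = pkey b2)"
  by (auto elim: fsParT intro: fstep.intros)

lemma invPre: "\<not> fstep Z b (Pre c X)"
  by (auto elim: fsPreT)

lemma invPNil: "\<not> fstep Z b PNil"
  by (auto elim: fsPNilT)


inductive_cases fsKPreS: "fstep (KPre c k X) b Z"
inductive_cases fsResS: "fstep (Res X l) b Z"
inductive_cases fsParS: "fstep (Par X Y) b Z"
inductive_cases fsSumS: "fstep (Sum X Y) b Z"
inductive_cases fsPreS: "fstep (Pre c X) b Z"
inductive_cases fsPNilS: "fstep PNil b Z"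

lemma invKPreS: "fstep (KPre c k X) b Z \<longleftrightarrow> (\<exists>Z0. Z = KPre c k Z0 \<and> fstep X b Z0 \<and> pkey b \<noteq> k)"
  by (auto elim: fsKPreS intro: fstep.intros)

lemma invPreS: "fstep (Pre c X) b Z \<longleftrightarrow> (\<exists>k. Z = KPre c k X \<and> b = PBase c k \<and> keys X = {})"
  by (auto elim: fsPreS intro: fstep.intros)

lemma invResS: "fstep (Res X l) b Z \<longleftrightarrow>
   (\<exists>Z0. Z = Res Z0 l \<and> fstep X b Z0 \<and> ell b \<noteq> Vis l \<and> ell b \<noteq> Vis (bar l))"
  by (auto elim: fsResS intro: fstep.intros)

lemma invSumS: "fstep (Sum X Y) b Z \<longleftrightarrow>
   (\<exists>Z0 b0. Z = Sum Z0 Y \<and> b = PPfx (DSum SL) b0 \<and> fstep X b0 Z0 \<and> keys Y = {}) \<or>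
   (\<exists>Z0 b0. Z = Sum X Z0 \<and> b = PPfx (DSum SR) b0 \<and> fstep Y b0 Z0 \<and> keys X = {})"
  by (auto elim: fsSumS intro: fstep.intros)

lemma invParS: "fstep (Par X Y) b Z \<longleftrightarrow>
   (\<exists>Z0 b0. Z = Par Z0 Y \<and> b = PPfx (DPar SL) b0 \<and> fstep X b0 Z0 \<and> pkey b0 \<notin> keys Y) \<or>
   (\<exists>Z0 b0. Z = Par X Z0 \<and> b = PPfx (DPar SR) b0 \<and> fstep Y b0 Z0 \<and> pkey b0 \<notin> keys X) \<or>
   (\<exists>Z1 Z2 b1 b2 l. Z = Par Z1 Z2 \<and> b = PSyn b1 b2 \<and> fstep X b1 Z1 \<and> fstep Y b2 Z2 \<and>
       ell b1 = Vis l \<and> ell b2 = Vis (bar l) \<and> pkey b1 = pkey b2)"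
  by (auto elim: fsParS intro: fstep.intros)

lemma invPNilS: "\<not> fstep PNil b Z"
  by (auto elim: fsPNilS)

lemma UU: "fstep X a Y \<Longrightarrow> fstep Z b Y \<Longrightarrow> pkey a = pkey b \<Longrightarrow> X = Z \<and> a = b"
proof (induction arbitrary: Z b rule: fstep.induct)
  case (act X a k)
  then show ?case by (auto simp: invKPre dest: fs_key_in)
next
  case (pre X th X' k a)
  from pre.prems pre.hyps show ?case by (auto simp: invKPre dest: fs_key_in pre.IH)
next
  case (res X th X' l)
  from res.prems res.hyps show ?case by (auto simp: invRes dest: res.IH)
next
  case (parL X th X' Y)
  from parL.prems parL.hyps show ?case by (auto simp: invPar dest: fs_key_in parL.IH)
next
  case (parR X th X' Y)
  from parR.prems parR.hyps show ?case by (auto simp: invPar dest: fs_key_in parR.IH)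
next
  case (syn X th1 X' Y th2 Y' l)
  from syn.prems syn.hyps show ?case by (auto simp: invPar dest: fs_key_in syn.IH)
next
  case (sumL X th X' Y)
  from sumL.prems sumL.hyps show ?case by (auto simp: invSum dest: fs_key_in sumL.IH)
next
  case (sumR X th X' Y)
  from sumR.prems sumR.hyps show ?case by (auto simp: invSum dest: fs_key_in sumR.IH)
qed


lemma keys_mono: "fstep X a Y \<Longrightarrow> keys X \<subseteq> keys Y"
  using keys_fstep by blast

lemma BB: "fstep X a Y \<Longrightarrow> fstep Z b Y \<Longrightarrow> pkey a \<noteq> pkey b \<Longrightarrow> \<exists>W. fstep W b X \<and> fstep W a Z"
proof (induction arbitrary: Z b rule: fstep.induct)
  case (act X a k)
  then show ?case by (auto simp: invKPre dest: fs_key_in)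
next
  case (pre X th X' k a)
  from pre.prems obtain Z0 where Z: "Z = KPre a k Z0" "fstep Z0 b X'" "pkey b \<noteq> k"
    using fs_key_in[OF pre.hyps(1)] by (auto simp: invKPre)
  from pre.IH[OF Z(2)] pre.prems obtain W where "fstep W b X" "fstep W th Z0" by blast
  then show ?case using Z pre.hyps by (auto intro!: exI[of _ "KPre a k W"] fstep.intros)
next
  case (res X th X' l)
  from res.prems obtain Z0 where Z: "Z = Res Z0 l" "fstep Z0 b X'" "ell b \<noteq> Vis l" "ell b \<noteq> Vis (bar l)"
    by (auto simp: invRes)
  from res.IH[OF Z(2)] res.prems obtain W where "fstep W b X" "fstep W th Z0" by blast
  then show ?case using Z res.hyps by (auto intro!: exI[of _ "Res W l"] fstep.intros)
next
  case (parL X th X' Y)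
  from parL.prems(1) consider
    (L) Z0 b0 where "Z = Par Z0 Y" "b = PPfx (DPar SL) b0" "fstep Z0 b0 X'" "pkey b0 \<notin> keys Y"
  | (R) Z0 b0 where "Z = Par X' Z0" "b = PPfx (DPar SR) b0" "fstep Z0 b0 Y" "pkey b0 \<notin> keys X'"
  | (S) Z1 Z2 b1 b2 l where "Z = Par Z1 Z2" "b = PSyn b1 b2" "fstep Z1 b1 X'" "fstep Z2 b2 Y"
       "ell b1 = Vis l" "ell b2 = Vis (bar l)" "pkey b1 = pkey b2"
    by (auto simp: invPar)
  then show ?case
  proof cases
    case L
    from parL.IH[OF L(3)] parL.prems L obtain W where "fstep W b0 X" "fstep W th Z0" by auto
    then show ?thesis using L parL.hyps by (auto intro!: exI[of _ "Par W Y"] fstep.intros)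
  next
    case R
    have "fstep (Par X Z0) b (Par X Y)" using R keys_mono[OF parL.hyps(1)] by (auto intro: fstep.intros)
    moreover have "fstep (Par X Z0) (PPfx (DPar SL) th) Z" using R parL.hyps keys_mono[OF R(3)]
      by (auto intro: fstep.intros)
    ultimately show ?thesis by blast
  next
    case S
    from parL.IH[OF S(3)] parL.prems S obtain W where "fstep W b1 X" "fstep W th Z1" by auto
    moreover have "pkey th \<notin> keys Z2" using parL.hyps keys_mono[OF S(4)] by auto
    ultimately show ?thesis using S by (auto intro!: exI[of _ "Par W Z2"] fstep.intros)
  qed
next
  case (parR X th X' Y)
  from parR.prems(1) consider
    (L) Z0 b0 where "Z = Par Z0 X'" "b = PPfx (DPar SL) b0" "fstep Z0 b0 Y" "pkey b0 \<notin> keys X'"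
  | (R) Z0 b0 where "Z = Par Y Z0" "b = PPfx (DPar SR) b0" "fstep Z0 b0 X'" "pkey b0 \<notin> keys Y"
  | (S) Z1 Z2 b1 b2 l where "Z = Par Z1 Z2" "b = PSyn b1 b2" "fstep Z1 b1 Y" "fstep Z2 b2 X'"
       "ell b1 = Vis l" "ell b2 = Vis (bar l)" "pkey b1 = pkey b2"
    by (auto simp: invPar)
  then show ?case
  proof cases
    case R
    from parR.IH[OF R(3)] parR.prems R obtain W where "fstep W b0 X" "fstep W th Z0" by auto
    then show ?thesis using R parR.hyps by (auto intro!: exI[of _ "Par Y W"] fstep.intros)
  next
    case L
    have "fstep (Par Z0 X) b (Par Y X)" using L keys_mono[OF parR.hyps(1)] by (auto intro: fstep.intros)
    moreover have "fstep (Par Z0 X) (PPfx (DPar SR) th) Z" using L parR.hyps keys_mono[OF L(3)]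
      by (auto intro: fstep.intros)
    ultimately show ?thesis by blast
  next
    case S
    from parR.IH[OF S(4)] parR.prems S obtain W where "fstep W b2 X" "fstep W th Z2" by auto
    moreover have "pkey th \<notin> keys Z1" using parR.hyps keys_mono[OF S(3)] by auto
    ultimately show ?thesis using S by (auto intro!: exI[of _ "Par Z1 W"] fstep.intros)
  qed
next
  case (syn X th1 X' Y th2 Y' l)
  from syn.prems(1) consider
    (L) Z0 b0 where "Z = Par Z0 Y'" "b = PPfx (DPar SL) b0" "fstep Z0 b0 X'" "pkey b0 \<notin> keys Y'"
  | (R) Z0 b0 where "Z = Par X' Z0" "b = PPfx (DPar SR) b0" "fstep Z0 b0 Y'" "pkey b0 \<notin> keys X'"
  | (S) Z1 Z2 b1 b2 l' where "Z = Par Z1 Z2" "b = PSyn b1 b2" "fstep Z1 b1 X'" "fstep Z2 b2 Y'"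
       "ell b1 = Vis l'" "ell b2 = Vis (bar l')" "pkey b1 = pkey b2"
    by (auto simp: invPar)
  then show ?case
  proof cases
    case L
    from syn.IH(1)[OF L(3)] syn.prems syn.hyps L obtain W where "fstep W b0 X" "fstep W th1 Z0" by auto
    moreover have "pkey b0 \<notin> keys Y" using L keys_mono[OF syn.hyps(2)] by auto
    ultimately show ?thesis using L syn.hyps by (auto intro!: exI[of _ "Par W Y"] fstep.intros)
  next
    case R
    from syn.IH(2)[OF R(3)] syn.prems syn.hyps R obtain W where "fstep W b0 Y" "fstep W th2 Z0" by auto
    moreover have "pkey b0 \<notin> keys X" using R keys_mono[OF syn.hyps(1)] by auto
    ultimately show ?thesis using R syn.hyps by (auto intro!: exI[of _ "Par X W"] fstep.intros)
  next
    case S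
    from syn.IH(1)[OF S(3)] syn.prems syn.hyps S obtain W1 where "fstep W1 b1 X" "fstep W1 th1 Z1" by auto
    moreover from syn.IH(2)[OF S(4)] syn.prems syn.hyps S obtain W2 where "fstep W2 b2 Y" "fstep W2 th2 Z2" by auto
    ultimately show ?thesis using S syn.hyps by (auto intro!: exI[of _ "Par W1 W2"] fstep.intros)
  qed
next
  case (sumL X th X' Y)
  from sumL.prems(1) sumL.hyps obtain Z0 b0 where Z: "Z = Sum Z0 Y" "b = PPfx (DSum SL) b0" "fstep Z0 b0 X'"
    by (auto simp: invSum dest: fs_key_in)
  from sumL.IH[OF Z(3)] sumL.prems Z obtain W where "fstep W b0 X" "fstep W th Z0" by auto
  then show ?case using Z sumL.hyps by (auto intro!: exI[of _ "Sum W Y"] fstep.intros)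
next
  case (sumR X th X' Y)
  from sumR.prems(1) sumR.hyps obtain Z0 b0 where Z: "Z = Sum Y Z0" "b = PPfx (DSum SR) b0" "fstep Z0 b0 X'"
    by (auto simp: invSum dest: fs_key_in)
  from sumR.IH[OF Z(3)] sumR.prems Z obtain W where "fstep W b0 X" "fstep W th Z0" by auto
  then show ?case using Z sumR.hyps by (auto intro!: exI[of _ "Sum Y W"] fstep.intros)
qed


lemma DI: "fstep W a Z \<Longrightarrow> fstep W b P \<Longrightarrow> fstep P a X \<Longrightarrow> fstep Z b X \<Longrightarrow> pkey a \<noteq> pkey b
   \<Longrightarrow> pindep a b"
proof (induction arbitrary: b P X rule: fstep.induct)
  case (act X0 c k)
  then show ?case by (auto simp: invPreS invKPreS)
next
  case (pre W0 th Z0 k c)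
  from pre.prems(1) obtain P0 where P: "P = KPre c k P0" "fstep W0 b P0" by (auto simp: invKPreS)
  from pre.prems(2) P obtain X0 where X: "X = KPre c k X0" "fstep P0 th X0" by (auto simp: invKPreS)
  from pre.prems(3) X have "fstep Z0 b X0" by (auto simp: invKPreS)
  then show ?case using pre.IH[OF P(2) X(2)] pre.prems by blast
next
  case (res W0 th Z0 l)
  from res.prems(1) obtain P0 where P: "P = Res P0 l" "fstep W0 b P0" by (auto simp: invResS)
  from res.prems(2) P obtain X0 where X: "X = Res X0 l" "fstep P0 th X0" by (auto simp: invResS)
  from res.prems(3) X have "fstep Z0 b X0" by (auto simp: invResS)
  then show ?case using res.IH[OF P(2) X(2)] res.prems by blast
next
  case (sumL W0 th Z0 W2)
  from sumL.prems(1) consider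
      (L) P0 b0 where "P = Sum P0 W2" "b = PPfx (DSum SL) b0" "fstep W0 b0 P0"
    | (R) P0 b0 where "P = Sum W0 P0" "fstep W2 b0 P0" by (auto simp: invSumS)
  then show ?case
  proof cases
    case L
    from sumL.prems(2) L obtain X0 where X: "X = Sum X0 W2" "fstep P0 th X0" by (auto simp: invSumS)
    from sumL.prems(3) X L have "fstep Z0 b0 X0" by (auto simp: invSumS)
    then show ?thesis using sumL.IH[OF L(3) X(2)] sumL.prems L by (auto intro: pindep.intros)
  next
    case R
    then show ?thesis using sumL.prems(2) fs_key_in[OF R(2)] by (auto simp: invSumS)
  qed
next
  case (sumR W0 th Z0 W1)
  from sumR.prems(1) consider
      (R) P0 b0 where "P = Sum W1 P0" "b = PPfx (DSum SR) b0" "fstep W0 b0 P0"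
    | (L) P0 b0 where "P = Sum P0 W0" "fstep W1 b0 P0" by (auto simp: invSumS)
  then show ?case
  proof cases
    case R
    from sumR.prems(2) R obtain X0 where X: "X = Sum W1 X0" "fstep P0 th X0" by (auto simp: invSumS)
    from sumR.prems(3) X R have "fstep Z0 b0 X0" by (auto simp: invSumS)
    then show ?thesis using sumR.IH[OF R(3) X(2)] sumR.prems R by (auto intro: pindep.intros)
  next
    case L
    then show ?thesis using sumR.prems(2) fs_key_in[OF L(2)] by (auto simp: invSumS)
  qed
next
  case (parL W1 th Z1 W2)
  from parL.prems(1) consider
    (L) P0 b0 where "P = Par P0 W2" "b = PPfx (DPar SL) b0" "fstep W1 b0 P0"
  | (R) P0 b0 where "P = Par W1 P0" "b = PPfx (DPar SR) b0"
  | (S) P1 P2 b1 b2 where "P = Par P1 P2" "b = PSyn b1 b2" "fstep W1 b1 P1" "fstep W2 b2 P2" "pkey b1 = pkey b2"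
    by (auto simp: invParS)
  then show ?case
  proof cases
    case L
    from parL.prems(2) L obtain X0 where X: "X = Par X0 W2" "fstep P0 th X0" by (auto simp: invParS)
    from parL.prems(3) X L have "fstep Z1 b0 X0" by (auto simp: invParS)
    then show ?thesis using parL.IH[OF L(3) X(2)] parL.prems L by (auto intro: pindep.intros)
  next
    case R
    then show ?thesis using parL.prems pindep.P2[of th b0 SL] by auto
  next
    case S
    from parL.prems(2) S obtain X1 where X: "X = Par X1 P2" "fstep P1 th X1" by (auto simp: invParS)
    from parL.prems(3) X S have "fstep Z1 b1 X1" by (auto simp: invParS)
    then have "pindep th b1" using parL.IH[OF S(3) X(2)] parL.prems S by auto
    then show ?thesis using S pindep.S1[of th SL b1 b2] by auto
  qed
next
  case (parR W2 th Z2 W1)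
  from parR.prems(1) consider
    (R) P0 b0 where "P = Par W1 P0" "b = PPfx (DPar SR) b0" "fstep W2 b0 P0"
  | (L) P0 b0 where "P = Par P0 W2" "b = PPfx (DPar SL) b0"
  | (S) P1 P2 b1 b2 where "P = Par P1 P2" "b = PSyn b1 b2" "fstep W1 b1 P1" "fstep W2 b2 P2" "pkey b1 = pkey b2"
    by (auto simp: invParS)
  then show ?case
  proof cases
    case R
    from parR.prems(2) R obtain X0 where X: "X = Par W1 X0" "fstep P0 th X0" by (auto simp: invParS)
    from parR.prems(3) X R have "fstep Z2 b0 X0" by (auto simp: invParS)
    then show ?thesis using parR.IH[OF R(3) X(2)] parR.prems R by (auto intro: pindep.intros)
  next
    case L
    then show ?thesis using parR.prems pindep.P2[of th b0 SR] by auto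
  next
    case S
    from parR.prems(2) S obtain X2 where X: "X = Par P1 X2" "fstep P2 th X2" by (auto simp: invParS)
    from parR.prems(3) X S have "fstep Z2 b2 X2" by (auto simp: invParS)
    then have "pindep th b2" using parR.IH[OF S(4) X(2)] parR.prems S by auto
    then show ?thesis using S pindep.S1[of th SR b1 b2] by auto
  qed
next
  case (syn W1 th1 Z1 W2 th2 Z2 l)
  from syn.prems(1) consider
    (L) P0 b0 where "P = Par P0 W2" "b = PPfx (DPar SL) b0" "fstep W1 b0 P0"
  | (R) P0 b0 where "P = Par W1 P0" "b = PPfx (DPar SR) b0" "fstep W2 b0 P0"
  | (S) P1 P2 b1 b2 where "P = Par P1 P2" "b = PSyn b1 b2" "fstep W1 b1 P1" "fstep W2 b2 P2" "pkey b1 = pkey b2"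
    by (auto simp: invParS)
  then show ?case
  proof cases
    case L
    from syn.prems(2) L obtain X1 X2 where X: "X = Par X1 X2" "fstep P0 th1 X1" by (auto simp: invParS)
    from syn.prems(3) X L have "fstep Z1 b0 X1" by (auto simp: invParS)
    then have "pindep th1 b0" using syn.IH(1)[OF L(3) X(2)] syn.prems L by auto
    then show ?thesis using L pindep.S2[of SL th1 th2 b0] by auto
  next
    case R
    from syn.prems(2) R obtain X1 X2 where X: "X = Par X1 X2" "fstep P0 th2 X2" by (auto simp: invParS)
    from syn.prems(3) X R have "fstep Z2 b0 X2" by (auto simp: invParS)
    then have "pindep th2 b0" using syn.IH(2)[OF R(3) X(2)] syn.prems R syn.hyps by auto
    then show ?thesis using R pindep.S2[of SR th1 th2 b0] by auto
  next
    case S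
    from syn.prems(2) S obtain X1 X2 where X: "X = Par X1 X2" "fstep P1 th1 X1" "fstep P2 th2 X2"
      by (auto simp: invParS)
    from syn.prems(3) X S have "fstep Z1 b1 X1" "fstep Z2 b2 X2" by (auto simp: invParS)
    then have "pindep th1 b1" "pindep th2 b2"
      using syn.IH(1)[OF S(3) X(2)] syn.IH(2)[OF S(4) X(3)] syn.prems S syn.hyps by auto
    then show ?thesis using S pindep.S3 by auto
  qed
qed


lemma pindep_wkey: "pindep a b \<Longrightarrow> fstep X a X' \<Longrightarrow> fstep Y b Y' \<Longrightarrow> pkey a \<noteq> pkey b"
  using pindep_key wfl_fstep by blast

lemma no_pindep_base: "\<not> pindep (PBase c k) b" "\<not> pindep b (PBase c k)"
  by (auto elim: pindep.cases)

lemma pindep_sumE: "pindep (PPfx (DSum D) a0) b \<Longrightarrow> \<exists>b0. b = PPfx (DSum D) b0 \<and> pindep a0 b0"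
  by (auto elim: pindep.cases)

lemma pindep_parE: "pindep (PPfx (DPar D) a0) b \<Longrightarrow>
   (\<exists>b0. b = PPfx (DPar D) b0 \<and> pindep a0 b0) \<or> (\<exists>b0. b = PPfx (DPar (oside D)) b0 \<and> pkey a0 \<noteq> pkey b0)
   \<or> (\<exists>b1 b2. b = PSyn b1 b2 \<and> pindep a0 (comp D b1 b2))"
  by (auto elim: pindep.cases)

lemma pindep_synE: "pindep (PSyn a1 a2) b \<Longrightarrow>
   (\<exists>D b0. b = PPfx (DPar D) b0 \<and> pindep (comp D a1 a2) b0)
   \<or> (\<exists>b1 b2. b = PSyn b1 b2 \<and> pindep a1 b1 \<and> pindep a2 b2)"
  by (auto elim: pindep.cases)

lemma SPf: "fstep P a Q \<Longrightarrow> fstep P b R \<Longrightarrow> pindep a b \<Longrightarrow> \<exists>S. fstep Q b S \<and> fstep R a S"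
proof (induction arbitrary: b R rule: fstep.induct)
  case (act X a k)
  then show ?case by (simp add: no_pindep_base)
next
  case (pre X th X' k c)
  from pre.prems(1) obtain R0 where R: "R = KPre c k R0" "fstep X b R0" "pkey b \<noteq> k" by (auto simp: invKPreS)
  from pre.IH[OF R(2)] pre.prems obtain S where "fstep X' b S" "fstep R0 th S" by blast
  then show ?case using R pre.hyps by (auto intro!: exI[of _ "KPre c k S"] fstep.intros)
next
  case (res X th X' l)
  from res.prems(1) obtain R0 where R: "R = Res R0 l" "fstep X b R0" "ell b \<noteq> Vis l" "ell b \<noteq> Vis (bar l)"
    by (auto simp: invResS)
  from res.IH[OF R(2)] res.prems obtain S where "fstep X' b S" "fstep R0 th S" by blast
  then show ?case using R res.hyps by (auto intro!: exI[of _ "Res S l"] fstep.intros)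
next
  case (sumL X th X' Y)
  from pindep_sumE[OF sumL.prems(2)] obtain b0 where b: "b = PPfx (DSum SL) b0" "pindep th b0" by blast
  from sumL.prems(1) b obtain R0 where R: "R = Sum R0 Y" "fstep X b0 R0" by (auto simp: invSumS)
  from sumL.IH[OF R(2) b(2)] obtain S where "fstep X' b0 S" "fstep R0 th S" by blast
  then show ?case using R b sumL.hyps by (auto intro!: exI[of _ "Sum S Y"] fstep.intros)
next
  case (sumR X th X' Y)
  from pindep_sumE[OF sumR.prems(2)] obtain b0 where b: "b = PPfx (DSum SR) b0" "pindep th b0" by blast
  from sumR.prems(1) b obtain R0 where R: "R = Sum Y R0" "fstep X b0 R0" by (auto simp: invSumS)
  from sumR.IH[OF R(2) b(2)] obtain S where "fstep X' b0 S" "fstep R0 th S" by blast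
  then show ?case using R b sumR.hyps by (auto intro!: exI[of _ "Sum Y S"] fstep.intros)
next
  case (parL X th X' Y)
  from pindep_parE[OF parL.prems(2)] show ?case
  proof (elim disjE exE conjE)
    fix b0 assume b: "b = PPfx (DPar SL) b0" "pindep th b0"
    from parL.prems(1) b obtain R0 where R: "R = Par R0 Y" "fstep X b0 R0" "pkey b0 \<notin> keys Y" by (auto simp: invParS)
    from parL.IH[OF R(2) b(2)] obtain S where "fstep X' b0 S" "fstep R0 th S" by blast
    then show ?thesis using R b parL.hyps by (auto intro!: exI[of _ "Par S Y"] fstep.intros)
  next
    fix b0 assume b: "b = PPfx (DPar (oside SL)) b0" "pkey th \<noteq> pkey b0"
    from parL.prems(1) b obtain R0 where R: "R = Par X R0" "fstep Y b0 R0" "pkey b0 \<notin> keys X" by (auto simp: invParS)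
    have "fstep (Par X' Y) b (Par X' R0)" using R b keys_fstep[OF parL.hyps(1)] by (auto intro: fstep.intros)
    moreover have "fstep R (PPfx (DPar SL) th) (Par X' R0)" using R b parL.hyps keys_fstep[OF R(2)]
      by (auto intro: fstep.intros)
    ultimately show ?thesis by blast
  next
    fix b1 b2 assume b: "b = PSyn b1 b2" "pindep th (comp SL b1 b2)"
    from parL.prems(1) b obtain R1 R2 l where R: "R = Par R1 R2" "fstep X b1 R1" "fstep Y b2 R2"
      "ell b1 = Vis l" "ell b2 = Vis (bar l)" "pkey b1 = pkey b2" by (auto simp: invParS)
    from parL.IH[OF R(2)] b obtain S where S: "fstep X' b1 S" "fstep R1 th S" by auto
    have "pkey th \<noteq> pkey b1" using pindep_wkey[OF _ parL.hyps(1) R(2)] b by auto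
    then show ?thesis using R b S parL.hyps keys_fstep[OF R(3)]
      by (auto intro!: exI[of _ "Par S R2"] fstep.intros)
  qed
next
  case (parR X th X' Y)
  from pindep_parE[OF parR.prems(2)] show ?case
  proof (elim disjE exE conjE)
    fix b0 assume b: "b = PPfx (DPar SR) b0" "pindep th b0"
    from parR.prems(1) b obtain R0 where R: "R = Par Y R0" "fstep X b0 R0" "pkey b0 \<notin> keys Y" by (auto simp: invParS)
    from parR.IH[OF R(2) b(2)] obtain S where "fstep X' b0 S" "fstep R0 th S" by blast
    then show ?thesis using R b parR.hyps by (auto intro!: exI[of _ "Par Y S"] fstep.intros)
  next
    fix b0 assume b: "b = PPfx (DPar (oside SR)) b0" "pkey th \<noteq> pkey b0"
    from parR.prems(1) b obtain R0 where R: "R = Par R0 X" "fstep Y b0 R0" "pkey b0 \<notin> keys X" by (auto simp: invParS)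
    have "fstep (Par Y X') b (Par R0 X')" using R b keys_fstep[OF parR.hyps(1)] by (auto intro: fstep.intros)
    moreover have "fstep R (PPfx (DPar SR) th) (Par R0 X')" using R b parR.hyps keys_fstep[OF R(2)]
      by (auto intro: fstep.intros)
    ultimately show ?thesis by blast
  next
    fix b1 b2 assume b: "b = PSyn b1 b2" "pindep th (comp SR b1 b2)"
    from parR.prems(1) b obtain R1 R2 l where R: "R = Par R1 R2" "fstep Y b1 R1" "fstep X b2 R2"
      "ell b1 = Vis l" "ell b2 = Vis (bar l)" "pkey b1 = pkey b2" by (auto simp: invParS)
    from parR.IH[OF R(3)] b obtain S where S: "fstep X' b2 S" "fstep R2 th S" by auto
    have "pkey th \<noteq> pkey b2" using pindep_wkey[OF _ parR.hyps(1) R(3)] b by auto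
    then show ?thesis using R b S parR.hyps keys_fstep[OF R(2)]
      by (auto intro!: exI[of _ "Par R1 S"] fstep.intros)
  qed
next
  case (syn X th1 X' Y th2 Y' l)
  from pindep_synE[OF syn.prems(2)] show ?case
  proof (elim disjE exE conjE)
    fix D b0 assume b: "b = PPfx (DPar D) b0" "pindep (comp D th1 th2) b0"
    show ?thesis
    proof (cases D)
      case SL
      from syn.prems(1) b SL obtain R0 where R: "R = Par R0 Y" "fstep X b0 R0" "pkey b0 \<notin> keys Y" by (auto simp: invParS)
      from syn.IH(1)[OF R(2)] b SL obtain S where S: "fstep X' b0 S" "fstep R0 th1 S" by auto
      have "pkey th1 \<noteq> pkey b0" using pindep_wkey[OF _ syn.hyps(1) R(2)] b SL by auto
      then show ?thesis using R b S SL syn.hyps keys_fstep[OF syn.hyps(2)]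
        by (auto intro!: exI[of _ "Par S Y'"] fstep.intros)
    next
      case SR
      from syn.prems(1) b SR obtain R0 where R: "R = Par X R0" "fstep Y b0 R0" "pkey b0 \<notin> keys X" by (auto simp: invParS)
      from syn.IH(2)[OF R(2)] b SR obtain S where S: "fstep Y' b0 S" "fstep R0 th2 S" by auto
      have "pkey th2 \<noteq> pkey b0" using pindep_wkey[OF _ syn.hyps(2) R(2)] b SR by auto
      then show ?thesis using R b S SR syn.hyps keys_fstep[OF syn.hyps(1)]
        by (auto intro!: exI[of _ "Par X' S"] fstep.intros)
    qed
  next
    fix b1 b2 assume b: "b = PSyn b1 b2" "pindep th1 b1" "pindep th2 b2"
    from syn.prems(1) b obtain R1 R2 l' where R: "R = Par R1 R2" "fstep X b1 R1" "fstep Y b2 R2"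
      "ell b1 = Vis l'" "ell b2 = Vis (bar l')" "pkey b1 = pkey b2" by (auto simp: invParS)
    from syn.IH(1)[OF R(2) b(2)] obtain S1 where S1: "fstep X' b1 S1" "fstep R1 th1 S1" by auto
    from syn.IH(2)[OF R(3) b(3)] obtain S2 where S2: "fstep Y' b2 S2" "fstep R2 th2 S2" by auto
    show ?thesis using R b S1 S2 syn.hyps by (auto intro!: exI[of _ "Par S1 S2"] fstep.intros)
  qed
qed


lemma SPm: "fstep P a Q \<Longrightarrow> fstep R b P \<Longrightarrow> pindep a b \<Longrightarrow> \<exists>S. fstep S b Q \<and> fstep R a S"
proof (induction arbitrary: b R rule: fstep.induct)
  case (act X a k)
  then show ?case by (simp add: no_pindep_base)
next
  case (pre X th X' k c)
  from pre.prems obtain R0 where R: "R = KPre c k R0" "fstep R0 b X" "pkey b \<noteq> k"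
    by (auto simp: invKPre no_pindep_base)
  from pre.IH[OF R(2)] pre.prems obtain S where "fstep S b X'" "fstep R0 th S" by blast
  then show ?case using R pre.hyps by (auto intro!: exI[of _ "KPre c k S"] fstep.intros)
next
  case (res X th X' l)
  from res.prems(1) obtain R0 where R: "R = Res R0 l" "fstep R0 b X" "ell b \<noteq> Vis l" "ell b \<noteq> Vis (bar l)"
    by (auto simp: invRes)
  from res.IH[OF R(2)] res.prems obtain S where "fstep S b X'" "fstep R0 th S" by blast
  then show ?case using R res.hyps by (auto intro!: exI[of _ "Res S l"] fstep.intros)
next
  case (sumL X th X' Y)
  from pindep_sumE[OF sumL.prems(2)] obtain b0 where b: "b = PPfx (DSum SL) b0" "pindep th b0" by blast
  from sumL.prems(1) b obtain R0 where R: "R = Sum R0 Y" "fstep R0 b0 X" by (auto simp: invSum)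
  from sumL.IH[OF R(2) b(2)] obtain S where "fstep S b0 X'" "fstep R0 th S" by blast
  then show ?case using R b sumL.hyps by (auto intro!: exI[of _ "Sum S Y"] fstep.intros)
next
  case (sumR X th X' Y)
  from pindep_sumE[OF sumR.prems(2)] obtain b0 where b: "b = PPfx (DSum SR) b0" "pindep th b0" by blast
  from sumR.prems(1) b obtain R0 where R: "R = Sum Y R0" "fstep R0 b0 X" by (auto simp: invSum)
  from sumR.IH[OF R(2) b(2)] obtain S where "fstep S b0 X'" "fstep R0 th S" by blast
  then show ?case using R b sumR.hyps by (auto intro!: exI[of _ "Sum Y S"] fstep.intros)
next
  case (parL X th X' Y)
  from pindep_parE[OF parL.prems(2)] show ?case
  proof (elim disjE exE conjE)
    fix b0 assume b: "b = PPfx (DPar SL) b0" "pindep th b0"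
    from parL.prems(1) b obtain R0 where R: "R = Par R0 Y" "fstep R0 b0 X" "pkey b0 \<notin> keys Y" by (auto simp: invPar)
    from parL.IH[OF R(2) b(2)] obtain S where "fstep S b0 X'" "fstep R0 th S" by blast
    then show ?thesis using R b parL.hyps by (auto intro!: exI[of _ "Par S Y"] fstep.intros)
  next
    fix b0 assume b: "b = PPfx (DPar (oside SL)) b0" "pkey th \<noteq> pkey b0"
    from parL.prems(1) b obtain R0 where R: "R = Par X R0" "fstep R0 b0 Y" "pkey b0 \<notin> keys X" by (auto simp: invPar)
    have "fstep (Par X' R0) b (Par X' Y)" using R b keys_fstep[OF parL.hyps(1)] by (auto intro: fstep.intros)
    moreover have "fstep R (PPfx (DPar SL) th) (Par X' R0)" using R b parL.hyps keys_mono[OF R(2)]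
      by (auto intro: fstep.intros)
    ultimately show ?thesis by blast
  next
    fix b1 b2 assume b: "b = PSyn b1 b2" "pindep th (comp SL b1 b2)"
    from parL.prems(1) b obtain R1 R2 l where R: "R = Par R1 R2" "fstep R1 b1 X" "fstep R2 b2 Y"
      "ell b1 = Vis l" "ell b2 = Vis (bar l)" "pkey b1 = pkey b2" by (auto simp: invPar)
    from parL.IH[OF R(2)] b obtain S where S: "fstep S b1 X'" "fstep R1 th S" by auto
    show ?thesis using R b S parL.hyps keys_mono[OF R(3)]
      by (auto intro!: exI[of _ "Par S R2"] fstep.intros)
  qed
next
  case (parR X th X' Y)
  from pindep_parE[OF parR.prems(2)] show ?case
  proof (elim disjE exE conjE)
    fix b0 assume b: "b = PPfx (DPar SR) b0" "pindep th b0"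
    from parR.prems(1) b obtain R0 where R: "R = Par Y R0" "fstep R0 b0 X" "pkey b0 \<notin> keys Y" by (auto simp: invPar)
    from parR.IH[OF R(2) b(2)] obtain S where "fstep S b0 X'" "fstep R0 th S" by blast
    then show ?thesis using R b parR.hyps by (auto intro!: exI[of _ "Par Y S"] fstep.intros)
  next
    fix b0 assume b: "b = PPfx (DPar (oside SR)) b0" "pkey th \<noteq> pkey b0"
    from parR.prems(1) b obtain R0 where R: "R = Par R0 X" "fstep R0 b0 Y" "pkey b0 \<notin> keys X" by (auto simp: invPar)
    have "fstep (Par R0 X') b (Par Y X')" using R b keys_fstep[OF parR.hyps(1)] by (auto intro: fstep.intros)
    moreover have "fstep R (PPfx (DPar SR) th) (Par R0 X')" using R b parR.hyps keys_mono[OF R(2)]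
      by (auto intro: fstep.intros)
    ultimately show ?thesis by blast
  next
    fix b1 b2 assume b: "b = PSyn b1 b2" "pindep th (comp SR b1 b2)"
    from parR.prems(1) b obtain R1 R2 l where R: "R = Par R1 R2" "fstep R1 b1 Y" "fstep R2 b2 X"
      "ell b1 = Vis l" "ell b2 = Vis (bar l)" "pkey b1 = pkey b2" by (auto simp: invPar)
    from parR.IH[OF R(3)] b obtain S where S: "fstep S b2 X'" "fstep R2 th S" by auto
    show ?thesis using R b S parR.hyps keys_mono[OF R(2)]
      by (auto intro!: exI[of _ "Par R1 S"] fstep.intros)
  qed
next
  case (syn X th1 X' Y th2 Y' l)
  from pindep_synE[OF syn.prems(2)] show ?case
  proof (elim disjE exE conjE)
    fix D b0 assume b: "b = PPfx (DPar D) b0" "pindep (comp D th1 th2) b0"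
    show ?thesis
    proof (cases D)
      case SL
      from syn.prems(1) b SL obtain R0 where R: "R = Par R0 Y" "fstep R0 b0 X" "pkey b0 \<notin> keys Y" by (auto simp: invPar)
      from syn.IH(1)[OF R(2)] b SL obtain S where S: "fstep S b0 X'" "fstep R0 th1 S" by auto
      have "pkey th1 \<noteq> pkey b0" using pindep_wkey[OF _ syn.hyps(1) R(2)] b SL by auto
      then show ?thesis using R b S SL syn.hyps keys_fstep[OF syn.hyps(2)]
        by (auto intro!: exI[of _ "Par S Y'"] fstep.intros)
    next
      case SR
      from syn.prems(1) b SR obtain R0 where R: "R = Par X R0" "fstep R0 b0 Y" "pkey b0 \<notin> keys X" by (auto simp: invPar)
      from syn.IH(2)[OF R(2)] b SR obtain S where S: "fstep S b0 Y'" "fstep R0 th2 S" by auto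
      have "pkey th2 \<noteq> pkey b0" using pindep_wkey[OF _ syn.hyps(2) R(2)] b SR by auto
      then show ?thesis using R b S SR syn.hyps keys_fstep[OF syn.hyps(1)]
        by (auto intro!: exI[of _ "Par X' S"] fstep.intros)
    qed
  next
    fix b1 b2 assume b: "b = PSyn b1 b2" "pindep th1 b1" "pindep th2 b2"
    from syn.prems(1) b obtain R1 R2 l' where R: "R = Par R1 R2" "fstep R1 b1 X" "fstep R2 b2 Y"
      "ell b1 = Vis l'" "ell b2 = Vis (bar l')" "pkey b1 = pkey b2" by (auto simp: invPar)
    from syn.IH(1)[OF R(2) b(2)] obtain S1 where S1: "fstep S1 b1 X'" "fstep R1 th1 S1" by auto
    from syn.IH(2)[OF R(3) b(3)] obtain S2 where S2: "fstep S2 b2 Y'" "fstep R2 th2 S2" by auto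
    show ?thesis using R b S1 S2 syn.hyps by (auto intro!: exI[of _ "Par S1 S2"] fstep.intros)
  qed
qed


lemma reach_any: assumes "reachable X" "any_step X Y" shows "reachable Y"
proof -
  from assms(1) obtain X0 where "keys X0 = {}" "(X0, X) \<in> {(P, Q). any_step P Q}\<^sup>*"
    unfolding reachable_def by blast
  moreover have "(X, Y) \<in> {(P, Q). any_step P Q}" using assms(2) by blast
  ultimately show ?thesis unfolding reachable_def by (blast intro: rtrancl_into_rtrancl)
qed

lemma reach_f: "reachable X \<Longrightarrow> fstep X a Y \<Longrightarrow> reachable Y"
  using reach_any unfolding any_step_def by blast

lemma reach_b: "reachable Y \<Longrightarrow> fstep X a Y \<Longrightarrow> reachable X"
  using reach_any unfolding any_step_def by blast

definition TF :: "'n proc \<Rightarrow> 'n plab \<Rightarrow> 'n proc \<Rightarrow> 'n trans" where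
  "TF P a Q = Tr P Fw (ell a) (pkey a) Q"
definition TB :: "'n proc \<Rightarrow> 'n plab \<Rightarrow> 'n proc \<Rightarrow> 'n trans" where
  "TB Q a P = Tr Q Bw (ell a) (pkey a) P"

lemma TF_simps[simp]: "src (TF P a Q) = P" "tgt (TF P a Q) = Q" "tdir (TF P a Q) = Fw"
  "lbl (TF P a Q) = ell a" "tkey (TF P a Q) = pkey a"
  by (auto simp: TF_def)
lemma TB_simps[simp]: "src (TB Q a P) = Q" "tgt (TB Q a P) = P" "tdir (TB Q a P) = Bw"
  "lbl (TB Q a P) = ell a" "tkey (TB Q a P) = pkey a"
  by (auto simp: TB_def)

lemma hat_TF: "fstep P a Q \<Longrightarrow> hat_lab (TF P a Q) th \<longleftrightarrow> th = a"
  unfolding hat_lab_def using UU[of P a Q P th] by auto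
lemma hat_TB: "fstep P a Q \<Longrightarrow> hat_lab (TB Q a P) th \<longleftrightarrow> th = a"
  unfolding hat_lab_def using UU[of P a Q P th] by auto

lemma is_trans_TF: "reachable P \<Longrightarrow> fstep P a Q \<Longrightarrow> is_trans (TF P a Q)"
  unfolding is_trans_def using hat_TF[of P a Q a] by auto
lemma is_trans_TB: "reachable Q \<Longrightarrow> fstep P a Q \<Longrightarrow> is_trans (TB Q a P)"
  unfolding is_trans_def using hat_TB[of P a Q a] by auto

lemma trans_form: "hat_lab t a \<Longrightarrow>
   (tdir t = Fw \<and> fstep (src t) a (tgt t) \<and> t = TF (src t) a (tgt t)) \<or>
   (tdir t = Bw \<and> fstep (tgt t) a (src t) \<and> t = TB (src t) a (tgt t))"
  by (cases t; cases "tdir t") (auto simp: hat_lab_def TF_def TB_def)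

lemma is_trans_reach_tgt: "is_trans t \<Longrightarrow> reachable (tgt t)"
  unfolding is_trans_def hat_lab_def by (auto split: if_splits intro: reach_f reach_b)

lemma in_path_rel: "is_trans t \<Longrightarrow> (src t, tgt t) \<in> path_rel"
  unfolding path_rel_def by auto

lemma diamond_ev:
  assumes r: "reachable W" and s1: "fstep W a Z" and s2: "fstep W b P" and s3: "fstep P a X"
    and s4: "fstep Z b X" and k: "pkey a \<noteq> pkey b"
  shows "ev_equiv (TF P a X) (TF W a Z) \<and> ev_equiv (TB X a P) (TB Z a W)"
proof -
  have rP: "reachable P" using r s2 reach_f by blast
  have rZ: "reachable Z" using r s1 reach_f by blast
  have rX: "reachable X" using rP s3 reach_f by blast
  have ind: "pindep a b" using DI[OF s1 s2 s3 s4 k] .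
  have T: "is_trans (TF P a X)" "is_trans (TF W a Z)" "is_trans (TB P b W)" "is_trans (TB X b Z)"
    "is_trans (TB X a P)" "is_trans (TB Z a W)"
    using is_trans_TF[OF rP s3] is_trans_TF[OF r s1] is_trans_TB[OF rP s2] is_trans_TB[OF rX s4]
      is_trans_TB[OF rX s3] is_trans_TB[OF rZ s1] by auto
  have i1: "tindep (TF P a X) (TB P b W)"
    unfolding tindep_def connected_def using T in_path_rel[OF T(3)] ind hat_TF[OF s3] hat_TB[OF s2] by auto
  have q1: "square (TF P a X) (TF W a Z)"
    unfolding square_def apply (rule exI[of _ "TB P b W"], rule exI[of _ "TB X b Z"]) using T i1 by auto
  have i2: "tindep (TB X a P) (TB X b Z)"
    unfolding tindep_def connected_def using T in_path_rel[OF T(4)] ind hat_TB[OF s3] hat_TB[OF s4] by auto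
  have q2: "square (TB X a P) (TB Z a W)"
    unfolding square_def apply (rule exI[of _ "TB X b Z"], rule exI[of _ "TB P b W"]) using T i2 by auto
  show ?thesis using q1 q2 by (simp add: ev_equiv.base)
qed


definition Fk :: "key \<Rightarrow> ('n proc \<times> 'n proc) set" where
  "Fk k = {(X, Y). \<exists>b. fstep X b Y \<and> pkey b \<noteq> k}"
definition Bk :: "key \<Rightarrow> ('n proc \<times> 'n proc) set" where
  "Bk k = {(X, Y). \<exists>b. fstep Y b X \<and> pkey b \<noteq> k}"

lemma avoid_sub: "path_rel_avoid k \<subseteq> Fk k \<union> Bk k"
proof
  fix p assume "p \<in> path_rel_avoid k"
  then obtain t where t: "is_trans t" "p = (src t, tgt t)" "tkey t \<noteq> k" unfolding path_rel_avoid_def by auto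
  then obtain a where "hat_lab t a" unfolding is_trans_def by auto
  from trans_form[OF this] this t show "p \<in> Fk k \<union> Bk k"
    unfolding Fk_def Bk_def hat_lab_def by auto
qed

lemma swap1: "(X, Y) \<in> Fk k \<Longrightarrow> (Y, Z) \<in> Bk k \<Longrightarrow> X = Z \<or> (\<exists>W. (X, W) \<in> Bk k \<and> (W, Z) \<in> Fk k)"
proof -
  assume "(X, Y) \<in> Fk k" "(Y, Z) \<in> Bk k"
  then obtain b1 b2 where s: "fstep X b1 Y" "pkey b1 \<noteq> k" "fstep Z b2 Y" "pkey b2 \<noteq> k"
    unfolding Fk_def Bk_def by auto
  show ?thesis
  proof (cases "pkey b1 = pkey b2")
    case True then show ?thesis using UU[OF s(1) s(3)] by auto
  next
    case False
    from BB[OF s(1) s(3) False] obtain W where "fstep W b2 X" "fstep W b1 Z" by blast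
    then show ?thesis using s unfolding Fk_def Bk_def by auto
  qed
qed

lemma parab1: "(X, Y) \<in> (Fk k)\<^sup>* \<Longrightarrow> (Y, Z) \<in> Bk k \<Longrightarrow> (X, Z) \<in> (Bk k)\<^sup>* O (Fk k)\<^sup>*"
proof (induction arbitrary: Z rule: rtrancl_induct)
  case base
  then show ?case by blast
next
  case (step Y1 Y)
  from swap1[OF step.hyps(2) step.prems] show ?case
  proof
    assume "Y1 = Z" then show ?thesis using step.hyps(1) by blast
  next
    assume "\<exists>W. (Y1, W) \<in> Bk k \<and> (W, Z) \<in> Fk k"
    then obtain W where W: "(Y1, W) \<in> Bk k" "(W, Z) \<in> Fk k" by blast
    from step.IH[OF W(1)] obtain M where "(X, M) \<in> (Bk k)\<^sup>*" "(M, W) \<in> (Fk k)\<^sup>*" by blast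
    then show ?thesis using W(2) by (blast intro: rtrancl_into_rtrancl)
  qed
qed

lemma parab: "(X, Y) \<in> (Fk k \<union> Bk k)\<^sup>* \<Longrightarrow> (X, Y) \<in> (Bk k)\<^sup>* O (Fk k)\<^sup>*"
proof (induction rule: rtrancl_induct)
  case base then show ?case by blast
next
  case (step Y Z)
  from step.IH obtain M where M: "(X, M) \<in> (Bk k)\<^sup>*" "(M, Y) \<in> (Fk k)\<^sup>*" by blast
  from step.hyps(2) show ?case
  proof
    assume "(Y, Z) \<in> Fk k" then show ?thesis using M by (blast intro: rtrancl_into_rtrancl)
  next
    assume "(Y, Z) \<in> Bk k"
    from parab1[OF M(2) this] obtain N where "(M, N) \<in> (Bk k)\<^sup>*" "(N, Z) \<in> (Fk k)\<^sup>*" by blast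
    then show ?thesis using M(1) by (blast intro: rtrancl_trans)
  qed
qed

lemma coreC:
  assumes rQ: "reachable Q" and t1: "fstep P a Q" and t2: "fstep P' a' Q'" and ka: "pkey a = k" and ka': "pkey a' = k"
    and path: "(Q, Q') \<in> (path_rel_avoid k)\<^sup>*"
  shows "ev_equiv (TF P a Q) (TF P' a' Q') \<and> ev_equiv (TB Q a P) (TB Q' a' P')"
proof -
  have "(Q, Q') \<in> (Fk k \<union> Bk k)\<^sup>*" using rtrancl_mono[OF avoid_sub] path by blast
  from parab[OF this] obtain M where M: "(Q, M) \<in> (Bk k)\<^sup>*" "(M, Q') \<in> (Fk k)\<^sup>*" by blast
  have part1: "\<exists>PX. fstep PX a X \<and> reachable X \<and> ev_equiv (TF P a Q) (TF PX a X) \<and> ev_equiv (TB Q a P) (TB X a PX)"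
    if "(Q, X) \<in> (Bk k)\<^sup>*" for X
    using that
  proof (induction rule: rtrancl_induct)
    case base then show ?case using t1 rQ by (auto intro: ev_equiv.refl)
  next
    case (step X Z)
    from step.IH obtain PX where IH: "fstep PX a X" "reachable X" "ev_equiv (TF P a Q) (TF PX a X)"
      "ev_equiv (TB Q a P) (TB X a PX)" by blast
    from step.hyps(2) obtain b where b: "fstep Z b X" "pkey b \<noteq> k" unfolding Bk_def by auto
    from BB[OF IH(1) b(1)] b ka obtain W where W: "fstep W b PX" "fstep W a Z" by auto
    have rW: "reachable W" using IH(2) IH(1) W(1) reach_b by blast
    from diamond_ev[OF rW W(2) W(1) IH(1) b(1)] b ka
    have "ev_equiv (TF PX a X) (TF W a Z)" "ev_equiv (TB X a PX) (TB Z a W)" by auto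
    then show ?case using IH W rW reach_f by (blast intro: ev_equiv.trans)
  qed
  have part2: "\<exists>PY. fstep PY a' Y \<and> ev_equiv (TF PY a' Y) (TF P' a' Q') \<and> ev_equiv (TB Y a' PY) (TB Q' a' P')"
    if "(Y, Q') \<in> (Fk k)\<^sup>*" "reachable Y" for Y
    using that
  proof (induction rule: converse_rtrancl_induct)
    case base then show ?case using t2 by (auto intro: ev_equiv.refl)
  next
    case (step X Y)
    from step.hyps(1) obtain b where b: "fstep X b Y" "pkey b \<noteq> k" unfolding Fk_def by auto
    have rY: "reachable Y" using step.prems b reach_f by blast
    from step.IH[OF rY] obtain PY where IH: "fstep PY a' Y" "ev_equiv (TF PY a' Y) (TF P' a' Q')"
      "ev_equiv (TB Y a' PY) (TB Q' a' P')" by blast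
    from BB[OF IH(1) b(1)] b ka' obtain W where W: "fstep W b PY" "fstep W a' X" by auto
    have rW: "reachable W" using step.prems W(2) reach_b by blast
    from diamond_ev[OF rW W(2) W(1) IH(1) b(1)] b ka'
    have "ev_equiv (TF PY a' Y) (TF W a' X)" "ev_equiv (TB Y a' PY) (TB X a' W)" by auto
    then show ?case using IH W by (blast intro: ev_equiv.trans ev_equiv.sym)
  qed
  from part1[OF M(1)] obtain PM where A: "fstep PM a M" "reachable M" "ev_equiv (TF P a Q) (TF PM a M)"
    "ev_equiv (TB Q a P) (TB M a PM)" by blast
  from part2[OF M(2) A(2)] obtain PM' where B: "fstep PM' a' M" "ev_equiv (TF PM' a' M) (TF P' a' Q')"
    "ev_equiv (TB M a' PM') (TB Q' a' P')" by blast
  from UU[OF A(1) B(1)] ka ka' have "PM = PM'" "a = a'" by auto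
  then show ?thesis using A B by (blast intro: ev_equiv.trans)
qed


definition trev :: "'n trans \<Rightarrow> 'n trans" where
  "trev t = Tr (tgt t) (if tdir t = Fw then Bw else Fw) (lbl t) (tkey t) (src t)"

lemma trev_simps[simp]: "src (trev t) = tgt t" "tgt (trev t) = src t" "lbl (trev t) = lbl t"
  "tkey (trev t) = tkey t" "tdir (trev t) = (if tdir t = Fw then Bw else Fw)"
  by (auto simp: trev_def)

lemma hat_trev: "hat_lab t th \<Longrightarrow> hat_lab (trev t) th"
  unfolding hat_lab_def by (cases "tdir t") auto

lemma is_trans_trev: "is_trans t \<Longrightarrow> is_trans (trev t)"
  using is_trans_reach_tgt hat_trev unfolding is_trans_def by fastforce

lemma fwd_trev: "fwd (trev t) = fwd t"
  by (cases t; cases "tdir t") (auto simp: fwd_def trev_def)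

lemma rtrancl_symI:
  assumes "\<And>x y. (x, y) \<in> r \<Longrightarrow> (y, x) \<in> r" "(x, y) \<in> r\<^sup>*" shows "(y, x) \<in> r\<^sup>*"
  using assms(2) by (induction rule: rtrancl_induct) (auto intro: converse_rtrancl_into_rtrancl assms(1))

lemma path_rel_sym: "(X, Y) \<in> path_rel \<Longrightarrow> (Y, X) \<in> path_rel"
  unfolding path_rel_def using is_trans_trev trev_simps by fastforce

lemma path_rel_avoid_sym: "(X, Y) \<in> path_rel_avoid k \<Longrightarrow> (Y, X) \<in> path_rel_avoid k"
  unfolding path_rel_avoid_def using is_trans_trev trev_simps by fastforce

lemma key_equiv_refl: "key_equiv t t"
  unfolding key_equiv_def by auto

lemma avoid_rt_sym: "(X, Y) \<in> (path_rel_avoid k)\<^sup>* \<Longrightarrow> (Y, X) \<in> (path_rel_avoid k)\<^sup>*"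
  using rtrancl_symI[of "path_rel_avoid k", OF path_rel_avoid_sym] by blast

lemma key_equiv_sym: "key_equiv t1 t2 \<Longrightarrow> key_equiv t2 t1"
  unfolding key_equiv_def using avoid_rt_sym by auto

lemma key_equiv_trans: "key_equiv t1 t2 \<Longrightarrow> key_equiv t2 t3 \<Longrightarrow> key_equiv t1 t3"
  unfolding key_equiv_def using rtrancl_trans by auto

lemma key_equiv_trev: "key_equiv t1 t2 \<Longrightarrow> key_equiv t1 (trev t2)"
  unfolding key_equiv_def fwd_trev .

lemma hat_wfl: "hat_lab t a \<Longrightarrow> wfl a"
  unfolding hat_lab_def by (auto split: if_splits intro: wfl_fstep)

lemma hat_key: "hat_lab t a \<Longrightarrow> pkey a = tkey t"
  unfolding hat_lab_def by auto

lemma tindep_key: "tindep t u \<Longrightarrow> tkey t \<noteq> tkey u"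
proof -
  assume "tindep t u"
  then obtain th th' where h: "hat_lab t th" "hat_lab u th'" "pindep th th'" unfolding tindep_def by blast
  have "pkey th \<noteq> pkey th'" using pindep_key[OF h(3) hat_wfl[OF h(1)] hat_wfl[OF h(2)]] .
  then show ?thesis using hat_key[OF h(1)] hat_key[OF h(2)] by simp
qed

lemma square_key_equiv: "square t t' \<Longrightarrow> key_equiv t t'"
proof -
  assume "square t t'"
  then obtain u u' where q: "is_trans t" "is_trans u" "is_trans u'" "is_trans t'"
     "src u = src t" "src u' = tgt t" "src t' = tgt u" "tgt u' = tgt t'"
     "lbl u' = lbl u" "tkey u' = tkey u" "tdir u' = tdir u"
     "lbl t' = lbl t" "tkey t' = tkey t" "tdir t' = tdir t" "tindep t u"
    unfolding square_def by blast
  have k: "tkey u \<noteq> tkey t" using tindep_key[OF q(15)] by auto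
  show ?thesis
  proof (cases "tdir t")
    case Fw
    have "(tgt t, tgt t') \<in> path_rel_avoid (tkey t)"
      unfolding path_rel_avoid_def using q k by auto
    then show ?thesis unfolding key_equiv_def fwd_def using Fw q by auto
  next
    case Bw
    have "(src t, src t') \<in> path_rel_avoid (tkey t)"
      unfolding path_rel_avoid_def using q k by auto
    then show ?thesis unfolding key_equiv_def fwd_def using Bw q by auto
  qed
qed

lemma square_props: "square t t' \<Longrightarrow> is_trans t \<and> is_trans t' \<and> tdir t = tdir t' \<and> (src t, src t') \<in> path_rel"
  unfolding square_def path_rel_def by auto

lemma ev_props: "ev_equiv t t' \<Longrightarrow> t = t' \<or> (is_trans t \<and> is_trans t' \<and> key_equiv t t' \<and> tdir t = tdir t'
   \<and> (src t, src t') \<in> path_rel\<^sup>* \<and> (src t', src t) \<in> path_rel\<^sup>*)"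
proof (induction rule: ev_equiv.induct)
  case (base t t')
  from square_props[OF base] square_key_equiv[OF base] show ?case
    using path_rel_sym by auto
next
  case (refl t) then show ?case by auto
next
  case (sym t t') then show ?case using key_equiv_sym by auto
next
  case (trans t t' t'')
  show ?case
  proof (cases "t = t' \<or> t' = t''")
    case True then show ?thesis using trans.IH by auto
  next
    case False
    then have A: "is_trans t \<and> is_trans t' \<and> key_equiv t t' \<and> tdir t = tdir t'
      \<and> (src t, src t') \<in> path_rel\<^sup>* \<and> (src t', src t) \<in> path_rel\<^sup>*"
      and B: "is_trans t' \<and> is_trans t'' \<and> key_equiv t' t'' \<and> tdir t' = tdir t''
      \<and> (src t', src t'') \<in> path_rel\<^sup>* \<and> (src t'', src t') \<in> path_rel\<^sup>*"
      using trans.IH by auto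
    then show ?thesis using key_equiv_trans[of t t' t''] rtrancl_trans[of "src t" "src t'" path_rel "src t''"]
      rtrancl_trans[of "src t''" "src t'" path_rel "src t"] by auto
  qed
qed

lemma keyeq_ev:
  assumes "is_trans t1" "is_trans t2" "tdir t1 = tdir t2" "key_equiv t1 t2"
  shows "ev_equiv t1 t2"
proof -
  obtain a1 where a1: "hat_lab t1 a1" using assms(1) unfolding is_trans_def by auto
  obtain a2 where a2: "hat_lab t2 a2" using assms(2) unfolding is_trans_def by auto
  have r1: "reachable (src t1)" "reachable (tgt t1)" using assms(1) is_trans_reach_tgt unfolding is_trans_def by auto
  have k: "pkey a1 = tkey t1" "pkey a2 = tkey t2" using a1 a2 hat_key by auto
  show ?thesis
  proof (cases "tdir t1")
    case Fw
    with trans_form[OF a1] trans_form[OF a2] assms(3) have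
      f: "fstep (src t1) a1 (tgt t1)" "t1 = TF (src t1) a1 (tgt t1)"
         "fstep (src t2) a2 (tgt t2)" "t2 = TF (src t2) a2 (tgt t2)" by auto
    have "(tgt t1, tgt t2) \<in> (path_rel_avoid (tkey t1))\<^sup>*" "tkey t1 = tkey t2"
      using assms(4) Fw assms(3) unfolding key_equiv_def fwd_def by auto
    from coreC[OF r1(2) f(1) f(3) k(1)] this k
    have "ev_equiv (TF (src t1) a1 (tgt t1)) (TF (src t2) a2 (tgt t2))" by simp
    then show ?thesis by (subst f(2), subst f(4))
  next
    case Bw
    with trans_form[OF a1] trans_form[OF a2] assms(3) have
      f: "fstep (tgt t1) a1 (src t1)" "t1 = TB (src t1) a1 (tgt t1)"
         "fstep (tgt t2) a2 (src t2)" "t2 = TB (src t2) a2 (tgt t2)" by auto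
    have "(src t1, src t2) \<in> (path_rel_avoid (tkey t1))\<^sup>*" "tkey t1 = tkey t2"
      using assms(4) Bw assms(3) unfolding key_equiv_def fwd_def by auto
    from coreC[OF r1(1) f(1) f(3) k(1)] this k
    have "ev_equiv (TB (src t1) a1 (tgt t1)) (TB (src t2) a2 (tgt t2))" by simp
    then show ?thesis by (subst f(2), subst f(4))
  qed
qed


lemma DL:
  assumes s1: "fstep R b P" and s2: "fstep R a S" and s3: "fstep P a' Q" and s4: "fstep S b' Q"
    and k1: "pkey a = pkey a'" and k2: "pkey b = pkey b'" and k3: "pkey a \<noteq> pkey b"
  shows "a' = a \<and> b' = b \<and> pindep a b \<and> pindep b a"
proof -
  have k4: "pkey a' \<noteq> pkey b'" using k1 k2 k3 by simp
  obtain W where W: "fstep W b' P" "fstep W a' S" using BB[OF s3 s4 k4] by blast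
  have k5: "pkey b' = pkey b" using k2 by simp
  have e1: "W = R" "b' = b" using UU[OF W(1) s1 k5] by auto
  have k6: "pkey a' = pkey a" using k1 by simp
  have e2: "a' = a" using UU[OF W(2) s2 k6] by auto
  have s3': "fstep P a Q" using s3 e2 by simp
  have s4': "fstep S b Q" using s4 e1 by simp
  have "pindep a b" using DI[OF s2 s1 s3' s4' k3] .
  moreover have "pindep b a" using DI[OF s1 s2 s4' s3'] k3 by auto
  ultimately show ?thesis using e1 e2 by auto
qed

lemma hat_step: "hat_lab t a \<Longrightarrow> (if tdir t = Fw then fstep (src t) a (tgt t) else fstep (tgt t) a (src t))"
  unfolding hat_lab_def by auto

lemma dki_tindep: "direct_key_indep t u \<Longrightarrow> tindep t u"
proof -
  assume "direct_key_indep t u"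
  then obtain u' t' where q: "is_trans t" "is_trans u" "src t = src u" "tkey t \<noteq> tkey u"
    "is_trans u'" "is_trans t'" "src u' = tgt t" "src t' = tgt u" "tgt u' = tgt t'"
    "lbl u' = lbl u" "tkey u' = tkey u" "tdir u' = tdir u"
    "lbl t' = lbl t" "tkey t' = tkey t" "tdir t' = tdir t"
    unfolding direct_key_indep_def by blast
  obtain a where a: "hat_lab t a" using q(1) unfolding is_trans_def by auto
  obtain b where b: "hat_lab u b" using q(2) unfolding is_trans_def by auto
  obtain b' where b': "hat_lab u' b'" using q(5) unfolding is_trans_def by auto
  obtain a' where a': "hat_lab t' a'" using q(6) unfolding is_trans_def by auto
  have k: "pkey a = pkey a'" "pkey b = pkey b'" "pkey a \<noteq> pkey b"
    using hat_key[OF a] hat_key[OF b] hat_key[OF a'] hat_key[OF b'] q by auto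
  note sa = hat_step[OF a] and sb = hat_step[OF b] and sa' = hat_step[OF a'] and sb' = hat_step[OF b']
  have "pindep a b"
  proof (cases "tdir t")
    case Fw
    show ?thesis
    proof (cases "tdir u")
      case Fw
      with \<open>tdir t = Fw\<close> sa sb sa' sb' q have "fstep (src t) b (tgt u)" "fstep (src t) a (tgt t)"
        "fstep (tgt u) a' (tgt t')" "fstep (tgt t) b' (tgt t')" by auto
      from DL[OF this k] show ?thesis by auto
    next
      case Bw
      with \<open>tdir t = Fw\<close> sa sb sa' sb' q have "fstep (tgt u) b (src t)" "fstep (tgt u) a' (tgt t')"
        "fstep (src t) a (tgt t)" "fstep (tgt t') b' (tgt t)" by auto
      from DL[OF this] k show ?thesis by auto
    qed
  next
    case Bw
    show ?thesis
    proof (cases "tdir u")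
      case Bw
      with \<open>tdir t = Bw\<close> sa sb sa' sb' q have "fstep (tgt t') b' (tgt t)" "fstep (tgt t') a' (tgt u)"
        "fstep (tgt t) a (src t)" "fstep (tgt u) b (src t)" by auto
      from DL[OF this] k show ?thesis by auto
    next
      case Fw
      with \<open>tdir t = Bw\<close> sa sb sa' sb' q have "fstep (tgt t) a (src t)" "fstep (tgt t) b' (tgt t')"
        "fstep (src t) b (tgt u)" "fstep (tgt t') a' (tgt u)" by auto
      from DL[OF this] k show ?thesis by auto
    qed
  qed
  then show ?thesis unfolding tindep_def connected_def
    using q a b in_path_rel[OF q(2)] by auto
qed

lemma dki_sym: "direct_key_indep t u \<Longrightarrow> direct_key_indep u t"
proof -
  assume "direct_key_indep t u"
  then obtain u' t' where q: "is_trans t" "is_trans u" "src t = src u" "tkey t \<noteq> tkey u"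
    "is_trans u'" "is_trans t'" "src u' = tgt t" "src t' = tgt u" "tgt u' = tgt t'"
    "lbl u' = lbl u" "tkey u' = tkey u" "tdir u' = tdir u"
    "lbl t' = lbl t" "tkey t' = tkey t" "tdir t' = tdir t"
    unfolding direct_key_indep_def by blast
  have "\<exists>u'' t''. is_trans u'' \<and> is_trans t'' \<and> src u'' = tgt u \<and> src t'' = tgt t \<and> tgt u'' = tgt t'' \<and>
        lbl u'' = lbl t \<and> tkey u'' = tkey t \<and> tdir u'' = tdir t \<and>
        lbl t'' = lbl u \<and> tkey t'' = tkey u \<and> tdir t'' = tdir u"
    by (rule exI[of _ t'], rule exI[of _ u']) (use q in auto)
  then show ?thesis unfolding direct_key_indep_def using q by auto
qed


lemma dki_intro:
  assumes "is_trans t" "is_trans u" "src t = src u" "tkey t \<noteq> tkey u"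
    "is_trans u'" "is_trans t'" "src u' = tgt t" "src t' = tgt u" "tgt u' = tgt t'"
    "lbl u' = lbl u" "tkey u' = tkey u" "tdir u' = tdir u"
    "lbl t' = lbl t" "tkey t' = tkey t" "tdir t' = tdir t"
  shows "direct_key_indep t u"
proof -
  have "\<exists>u'' t''. is_trans u'' \<and> is_trans t'' \<and> src u'' = tgt t \<and> src t'' = tgt u \<and> tgt u'' = tgt t'' \<and>
        lbl u'' = lbl u \<and> tkey u'' = tkey u \<and> tdir u'' = tdir u \<and>
        lbl t'' = lbl t \<and> tkey t'' = tkey t \<and> tdir t'' = tdir t"
    by (rule exI[of _ u'], rule exI[of _ t']) (use assms in auto)
  then show ?thesis unfolding direct_key_indep_def using assms by auto
qed

lemma hat_lbl: "hat_lab t a \<Longrightarrow> ell a = lbl t"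
  unfolding hat_lab_def by auto

lemma SP_dki:
  assumes ti: "tindep t u" and co: "src t = src u"
  shows "direct_key_indep t u"
proof -
  obtain a b where h: "hat_lab t a" "hat_lab u b" "pindep a b" and T: "is_trans t" "is_trans u"
    using ti unfolding tindep_def by blast
  have kd: "tkey t \<noteq> tkey u" using tindep_key[OF ti] .
  have rX: "reachable (src t)" using T unfolding is_trans_def by auto
  have L: "ell a = lbl t" "pkey a = tkey t" "ell b = lbl u" "pkey b = tkey u"
    using h hat_lbl hat_key by auto
  note sa = hat_step[OF h(1)] and sb = hat_step[OF h(2)]
  show ?thesis
  proof (cases "tdir t")
    case Fw
    show ?thesis
    proof (cases "tdir u")
      case Fw
      with \<open>tdir t = Fw\<close> sa sb co have f: "fstep (src t) a (tgt t)" "fstep (src t) b (tgt u)" by auto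
      from SPf[OF f h(3)] obtain S where S: "fstep (tgt t) b S" "fstep (tgt u) a S" by blast
      have r: "reachable (tgt t)" "reachable (tgt u)" using rX f reach_f by auto
      show ?thesis
        by (rule dki_intro[OF T co kd is_trans_TF[OF r(1) S(1)] is_trans_TF[OF r(2) S(2)]])
           (use L Fw \<open>tdir t = Fw\<close> in auto)
    next
      case Bw
      with \<open>tdir t = Fw\<close> sa sb co have f: "fstep (src t) a (tgt t)" "fstep (tgt u) b (src t)" by auto
      from SPm[OF f h(3)] obtain S where S: "fstep S b (tgt t)" "fstep (tgt u) a S" by blast
      have r: "reachable (tgt t)" "reachable (tgt u)" using rX f reach_f reach_b by auto
      show ?thesis
        by (rule dki_intro[OF T co kd is_trans_TB[OF r(1) S(1)] is_trans_TF[OF r(2) S(2)]])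
           (use L Bw \<open>tdir t = Fw\<close> in auto)
    qed
  next
    case Bw
    show ?thesis
    proof (cases "tdir u")
      case Fw
      with \<open>tdir t = Bw\<close> sa sb co have f: "fstep (src t) b (tgt u)" "fstep (tgt t) a (src t)" by auto
      from SPm[OF f pindep_sym[OF h(3)]] obtain S where S: "fstep S a (tgt u)" "fstep (tgt t) b S" by blast
      have r: "reachable (tgt t)" "reachable (tgt u)" using rX f reach_f reach_b by auto
      show ?thesis
        by (rule dki_intro[OF T co kd is_trans_TF[OF r(1) S(2)] is_trans_TB[OF r(2) S(1)]])
           (use L Fw \<open>tdir t = Bw\<close> in auto)
    next
      case Bw
      with \<open>tdir t = Bw\<close> sa sb co have f: "fstep (tgt t) a (src t)" "fstep (tgt u) b (src t)" by auto
      have kab: "pkey a \<noteq> pkey b" using L kd by simp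
      from BB[OF f kab] obtain W where W: "fstep W b (tgt t)" "fstep W a (tgt u)" by blast
      have r: "reachable (tgt t)" "reachable (tgt u)" using rX f reach_b by auto
      show ?thesis
        by (rule dki_intro[OF T co kd is_trans_TB[OF r(1) W(1)] is_trans_TB[OF r(2) W(2)]])
           (use L Bw \<open>tdir t = Bw\<close> in auto)
    qed
  qed
qed

lemma flip_t:
  assumes "direct_key_indep t u"
  shows "\<exists>u2. direct_key_indep (trev t) u2 \<and> ev_equiv u u2"
proof -
  from assms obtain u' t' where q: "is_trans t" "is_trans u" "src t = src u" "tkey t \<noteq> tkey u"
    "is_trans u'" "is_trans t'" "src u' = tgt t" "src t' = tgt u" "tgt u' = tgt t'"
    "lbl u' = lbl u" "tkey u' = tkey u" "tdir u' = tdir u"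
    "lbl t' = lbl t" "tkey t' = tkey t" "tdir t' = tdir t"
    unfolding direct_key_indep_def by blast
  have d1: "direct_key_indep (trev t) u'"
    by (rule dki_intro[OF is_trans_trev[OF q(1)] q(5) _ _ q(2) is_trans_trev[OF q(6)]]) (use q in auto)
  have ti: "tindep u t" using dki_tindep[OF dki_sym[OF assms]] .
  have "\<exists>v v'. is_trans u \<and> is_trans v \<and> is_trans v' \<and> is_trans u' \<and>
     src v = src u \<and> src v' = tgt u \<and> src u' = tgt v \<and> tgt v' = tgt u' \<and>
     lbl v' = lbl v \<and> tkey v' = tkey v \<and> tdir v' = tdir v \<and>
     lbl u' = lbl u \<and> tkey u' = tkey u \<and> tdir u' = tdir u \<and> tindep u v"
    by (rule exI[of _ t], rule exI[of _ t']) (use q ti in auto)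
  then have "square u u'" unfolding square_def .
  then show ?thesis using d1 ev_equiv.base by blast
qed

lemma flip_u:
  assumes "direct_key_indep t u"
  shows "\<exists>t2. direct_key_indep t2 (trev u) \<and> ev_equiv t t2"
  using flip_t[OF dki_sym[OF assms]] dki_sym by blast

lemma dki_trans: "direct_key_indep t u \<Longrightarrow> is_trans t \<and> is_trans u"
  unfolding direct_key_indep_def by auto

lemma ev_key: "ev_equiv t t' \<Longrightarrow> key_equiv t t' \<and> (t = t' \<or> (is_trans t' \<and> tdir t = tdir t'))"
  using ev_props key_equiv_refl by metis

lemma dir_cases: "d \<noteq> Fw \<Longrightarrow> d = Bw" by (cases d) auto

lemma normalize:
  assumes "key_equiv t t1" "key_equiv u u1" "direct_key_indep t1 u1"
  shows "\<exists>t2 u2. key_equiv t t2 \<and> key_equiv u u2 \<and> direct_key_indep t2 u2 \<and> tdir t2 = tdir t \<and> tdir u2 = tdir u"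
proof -
  obtain t3 u3 where A: "key_equiv t t3" "key_equiv u u3" "direct_key_indep t3 u3" "tdir t3 = tdir t"
  proof (cases "tdir t1 = tdir t")
    case True then show ?thesis using that assms by blast
  next
    case False
    from flip_t[OF assms(3)] obtain u2 where u2: "direct_key_indep (trev t1) u2" "ev_equiv u1 u2" by blast
    have "key_equiv u u2" using key_equiv_trans[OF assms(2)] ev_key[OF u2(2)] by blast
    moreover have "key_equiv t (trev t1)" using key_equiv_trev[OF assms(1)] .
    moreover have "tdir (trev t1) = tdir t" using False by (cases "tdir t"; cases "tdir t1") auto
    ultimately show ?thesis using that u2 by blast
  qed
  show ?thesis
  proof (cases "tdir u3 = tdir u")
    case True then show ?thesis using A by blast
  next
    case False
    from flip_u[OF A(3)] obtain t2 where t2: "direct_key_indep t2 (trev u3)" "ev_equiv t3 t2" by blast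
    have "key_equiv t t2" using key_equiv_trans[OF A(1)] ev_key[OF t2(2)] by blast
    moreover have "tdir t2 = tdir t" using ev_key[OF t2(2)] A(4) by auto
    moreover have "key_equiv u (trev u3)" using key_equiv_trev[OF A(2)] .
    moreover have "tdir (trev u3) = tdir u" using False by (cases "tdir u"; cases "tdir u3") auto
    ultimately show ?thesis using t2 by blast
  qed
qed

theorem proposition6p12:
  fixes t u :: "'n trans"
  assumes "is_trans t" and "is_trans u"
  shows "key_indep t u \<longleftrightarrow> core_indep t u"
proof
  assume "key_indep t u"
  then obtain t1 u1 where "key_equiv t t1" "key_equiv u u1" "direct_key_indep t1 u1"
    unfolding key_indep_def by blast
  from normalize[OF this] obtain t2 u2 where n: "key_equiv t t2" "key_equiv u u2" "direct_key_indep t2 u2"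
    "tdir t2 = tdir t" "tdir u2 = tdir u" by blast
  have T: "is_trans t2" "is_trans u2" using dki_trans[OF n(3)] by auto
  have "ev_equiv t t2" using keyeq_ev[OF assms(1) T(1) n(4)[symmetric] n(1)] .
  moreover have "ev_equiv u u2" using keyeq_ev[OF assms(2) T(2) n(5)[symmetric] n(2)] .
  moreover have "tindep t2 u2" using dki_tindep[OF n(3)] .
  moreover have "src t2 = src u2" using n(3) unfolding direct_key_indep_def by auto
  ultimately show "core_indep t u" unfolding core_indep_def by blast
next
  assume "core_indep t u"
  then obtain t1 u1 where c: "src t1 = src u1" "ev_equiv t t1" "ev_equiv u u1" "tindep t1 u1"
    unfolding core_indep_def by blast
  have d: "direct_key_indep t1 u1" using SP_dki[OF c(4) c(1)] .
  have T: "is_trans t1" "is_trans u1" using dki_trans[OF d] by auto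
  have k: "key_equiv t t1" "key_equiv u u1" using ev_key c by auto
  have p1: "(src t, src t1) \<in> path_rel\<^sup>*" using ev_props[OF c(2)] by auto
  have p2: "(src u1, src u) \<in> path_rel\<^sup>*" using ev_props[OF c(3)] by auto
  have p3: "(src u, tgt u) \<in> path_rel" using in_path_rel[OF assms(2)] .
  have "connected t u" unfolding connected_def using p1 p2 p3 c(1)
    by (metis rtrancl.rtrancl_into_rtrancl rtrancl_trans)
  then show "key_indep t u" unfolding key_indep_def using T k d by blast
qed

end
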